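(* For $q=p^h$ with $p$ prime and $h\geq1$, $$d\big(C(PG(2,q))^\perp\big)\leq 2q+1-\frac{q-1}{p-1}.$$
   Context: $C(PG(2,q))$ is the $\mathbb{F}_p$-span of the incidence vectors of the lines of $PG(2,q)$, with coordinates indexed by points. $C^\perp$ is its dual with respect to the standard scalar product over $\mathbb{F}_p$. $d(\cdot)$ is the minimum nonzero weight. *)

theory Defs
  imports Complex_Main "HOL-Computational_Algebra.Primes"
begin

type_synonym 'k vec3 = "'k \<times> 'k \<times> 'k"

definition smul3 :: "'k::field \<Rightarrow> 'k vec3 \<Rightarrow> 'k vec3" where
  "smul3 t v = (case v of (a, b, c) \<Rightarrow> (t * a, t * b, t * c))"

definition dot3 :: "'k::field vec3 \<Rightarrow> 'k vec3 \<Rightarrow> 'k" where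
  "dot3 v u = (case v of (a, b, c) \<Rightarrow> case u of (x, y, z) \<Rightarrow> a * x + b * y + c * z)"

definition pg_pt :: "'k::field vec3 \<Rightarrow> 'k vec3 set" where
  "pg_pt v = {smul3 t v | t. t \<noteq> 0}"

definition pg_points :: "'k::field vec3 set set" where
  "pg_points = pg_pt ` (UNIV - {(0, 0, 0)})"

definition pg_line :: "'k::field vec3 \<Rightarrow> 'k vec3 set set" where
  "pg_line u = {pg_pt v | v. v \<noteq> (0, 0, 0) \<and> dot3 v u = 0}"

definition pg_lines :: "'k::field vec3 set set set" where
  "pg_lines = pg_line ` (UNIV - {(0, 0, 0)})"

text \<open>Vectors over F_p indexed by the points, F_p represented by {0..<p}.\<close>
definition words :: "nat \<Rightarrow> ('k::field vec3 set \<Rightarrow> int) set" where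
  "words p = {c. (\<forall>x. 0 \<le> c x \<and> c x < int p) \<and> (\<forall>x. x \<notin> (pg_points :: 'k vec3 set set) \<longrightarrow> c x = 0)}"

definition incid :: "'k::field vec3 set set \<Rightarrow> 'k vec3 set \<Rightarrow> int" where
  "incid L x = (if x \<in> L then 1 else 0)"

definition code_PG :: "nat \<Rightarrow> ('k::field vec3 set \<Rightarrow> int) set" where
  "code_PG p = {c \<in> words p. \<exists>a :: 'k vec3 set set \<Rightarrow> int.
      \<forall>x\<in>pg_points. c x = (\<Sum>L\<in>pg_lines. a L * incid L x) mod int p}"

definition dual_code :: "nat \<Rightarrow> ('k::field vec3 set \<Rightarrow> int) set \<Rightarrow> ('k vec3 set \<Rightarrow> int) set" where
  "dual_code p C = {c \<in> words p. \<forall>d\<in>C. (\<Sum>x\<in>pg_points. c x * d x) mod int p = 0}"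

definition weight :: "('k::field vec3 set \<Rightarrow> int) \<Rightarrow> nat" where
  "weight c = card {x \<in> (pg_points :: 'k vec3 set set). c x \<noteq> 0}"

definition min_dist :: "('k::field vec3 set \<Rightarrow> int) set \<Rightarrow> nat" where
  "min_dist C = Min (weight ` (C - {\<lambda>_. 0}))"

end

theory Submission
  imports Defs "HOL-Number_Theory.Residues" "HOL-Computational_Algebra.Polynomial"
begin


lemma CHAR_finite_field:
  assumes "prime p" "card (UNIV :: 'k::{field,finite} set) = p ^ h"
  shows "CHAR('k) = p"
proof -
  have pos: "CHAR('k) > 0" by (rule finite_imp_CHAR_pos) simp
  have pr: "prime CHAR('k)" using prime_CHAR_semidom[OF pos] .
  have "CHAR('k) dvd p ^ h" using CHAR_dvd_CARD[where ?'a='k] assms(2) by simp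
  hence "CHAR('k) dvd p" using pr prime_dvd_power by blast
  thus ?thesis using pr assms(1) primes_dvd_imp_eq by blast
qed

context
  fixes p :: nat
  assumes charp: "CHAR('k::{field,finite}) = p"
begin

lemma p_prime: "prime p"
proof -
  have pos: "CHAR('k) > 0" by (rule finite_imp_CHAR_pos) simp
  show ?thesis using prime_CHAR_semidom[OF pos] charp by simp
qed

lemma frob_add: "((x::'k) + y) ^ p = x ^ p + y ^ p"
  by (rule freshmans_dream) (use charp p_prime in auto)

lemma frob_neg: "(- (x::'k)) ^ p = - (x ^ p)"
  using minus_power_prime_CHAR[of p x] charp p_prime by simp

lemma frob_diff: "((x::'k) - y) ^ p = x ^ p - y ^ p"
  using frob_add[of x "-y"] frob_neg[of y] by simp

definition psi :: "'k \<Rightarrow> 'k \<Rightarrow> 'k" where "psi m x = x ^ p - m * x"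

definition KK :: "'k \<Rightarrow> 'k set" where "KK m = {x. x ^ p = m * x}"

lemma psi_diff: "psi m (x - y) = psi m x - psi m y"
  by (simp add: psi_def frob_diff algebra_simps)

lemma psi_add: "psi m (x + y) = psi m x + psi m y"
  by (simp add: psi_def frob_add algebra_simps)

lemma KK_psi: "x \<in> KK m \<longleftrightarrow> psi m x = 0"
  by (simp add: KK_def psi_def)

lemma zero_KK: "0 \<in> KK m"
  using p_prime by (simp add: KK_def prime_gt_0_nat)

lemma fiber_eq:
  assumes "psi m x0 = b"
  shows "{x. psi m x = b} = (\<lambda>k. x0 + k) ` KK m"
proof (intro equalityI subsetI)
  fix x assume "x \<in> {x. psi m x = b}"
  hence "x - x0 \<in> KK m" using assms by (simp add: KK_psi psi_diff)
  thus "x \<in> (\<lambda>k. x0 + k) ` KK m" by (intro image_eqI[of _ _ "x - x0"]) auto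
next
  fix x assume "x \<in> (\<lambda>k. x0 + k) ` KK m"
  then obtain k where "k \<in> KK m" "x = x0 + k" by auto
  thus "x \<in> {x. psi m x = b}" using assms by (simp add: KK_psi psi_add)
qed

lemma card_fiber:
  assumes "psi m x0 = b"
  shows "card {x. psi m x = b} = card (KK m)"
  using fiber_eq[OF assms] by (simp add: card_image inj_on_def)

lemma card_fiber_cases: "card {x. psi m x = b} = 0 \<or> card {x. psi m x = b} = card (KK m)"
proof (cases "\<exists>x0. psi m x0 = b")
  case True
  then obtain x0 where "psi m x0 = b" by blast
  then show ?thesis using card_fiber by blast
next
  case False
  hence "{x. psi m x = b} = {}" by auto
  thus ?thesis by (metis card.empty)
qed

lemma KK_dvd_card: "card (KK m) dvd card (UNIV :: 'k set)"
proof -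
  have "(\<Sum>b\<in>range (psi m). \<Sum>x\<in>{x \<in> UNIV. psi m x = b}. 1::nat) = (\<Sum>x\<in>(UNIV::'k set). 1)"
    by (rule sum.group) auto
  hence "card (UNIV :: 'k set) = (\<Sum>b\<in>range (psi m). card {x. psi m x = b})"
    by simp
  also have "\<dots> = (\<Sum>b\<in>range (psi m). card (KK m))"
    by (intro sum.cong refl) (auto intro: card_fiber)
  finally show ?thesis by simp
qed


lemma p_ge2: "p \<ge> 2" using p_prime prime_ge_2_nat by blast

lemma card_KK_le: "card (KK m) \<le> p"
proof -
  define P where "P = monom (1::'k) p - [:0, m:]"
  have "KK m = {x. poly P x = 0}"
    by (auto simp: KK_def P_def poly_monom algebra_simps)
  moreover have "P \<noteq> 0"
  proof
    assume "P = 0"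
    hence "coeff P p = 0" by simp
    thus False using p_ge2 by (simp add: P_def coeff_pCons split: nat.splits)
  qed
  moreover have "degree P \<le> p"
    unfolding P_def using p_ge2
    by (intro degree_diff_le degree_monom_le) (auto simp: degree_pCons_eq_if)
  ultimately show ?thesis using card_poly_roots_bound[of P] by simp
qed

lemma p_dvd_KK:
  assumes "card (UNIV :: 'k set) = p ^ h" and "x \<in> KK m" "x \<noteq> 0"
  shows "p dvd card (KK m)"
proof -
  obtain i where i: "card (KK m) = p ^ i"
    using KK_dvd_card[of m] assms(1) divides_primepow_nat[OF p_prime] by auto
  have "{0, x} \<subseteq> KK m" using assms zero_KK by auto
  hence "card {0, x} \<le> card (KK m)" by (intro card_mono) auto
  hence "card (KK m) \<ge> 2" using assms(3) by simp
  hence "i \<noteq> 0" using i by (cases i) auto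
  thus ?thesis using i by (cases i) auto
qed

definition DD :: "'k set" where "DD = {m. \<exists>x. x \<noteq> 0 \<and> x ^ p = m * x}"

lemma card_nonzero_sum: "card {x::'k. x \<noteq> 0} = (\<Sum>m\<in>DD. card (KK m) - 1)"
proof -
  define f where "f x = x ^ p / x" for x :: 'k
  have fe: "f x = m \<longleftrightarrow> x ^ p = m * x" if "x \<noteq> 0" for x m
    using that by (simp add: f_def divide_eq_eq)
  have img: "f ` {x::'k. x \<noteq> 0} \<subseteq> DD"
  proof
    fix y assume "y \<in> f ` {x::'k. x \<noteq> 0}"
    then obtain x where "x \<noteq> 0" "y = f x" by auto
    thus "y \<in> DD" unfolding DD_def using fe by blast
  qed
  have "(\<Sum>m\<in>DD. \<Sum>x\<in>{x \<in> {x::'k. x \<noteq> 0}. f x = m}. 1::nat) = (\<Sum>x\<in>{x::'k. x \<noteq> 0}. 1)"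
    by (rule sum.group) (use img in auto)
  hence "card {x::'k. x \<noteq> 0} = (\<Sum>m\<in>DD. card {x \<in> {x::'k. x \<noteq> 0}. f x = m})"
    by simp
  also have "\<dots> = (\<Sum>m\<in>DD. card (KK m - {0}))"
  proof (intro sum.cong refl arg_cong[where f=card])
    fix m show "{x \<in> {x::'k. x \<noteq> 0}. f x = m} = KK m - {0}"
      using fe by (auto simp: KK_def)
  qed
  also have "\<dots> = (\<Sum>m\<in>DD. card (KK m) - 1)"
    by (intro sum.cong refl) (simp add: zero_KK)
  finally show ?thesis .
qed

lemma DD_bounds:
  assumes "card (UNIV :: 'k set) = p ^ h" "h \<ge> 1"
  shows "int p dvd int (card DD) - 1" and "card (UNIV :: 'k set) - 1 \<le> card DD * (p - 1)"
proof -
  have cnz: "card {x::'k. x \<noteq> 0} = card (UNIV :: 'k set) - 1"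
  proof -
    have "{x::'k. x \<noteq> 0} = UNIV - {0}" by auto
    thus ?thesis by (simp add: card_Diff_subset)
  qed
  have KKpos: "card (KK m) \<ge> 1" for m
    using zero_KK[of m] card_0_eq[of "KK m"] by fastforce
  have "card (UNIV :: 'k set) - 1 = (\<Sum>m\<in>DD. card (KK m) - 1)"
    using card_nonzero_sum cnz by simp
  also have "\<dots> \<le> (\<Sum>m\<in>DD. p - 1)"
    by (intro sum_mono) (use card_KK_le in \<open>auto intro: diff_le_mono\<close>)
  finally show "card (UNIV :: 'k set) - 1 \<le> card DD * (p - 1)" by simp
  have cpos: "card (UNIV :: 'k set) \<ge> 1"
    by (simp add: Suc_leI card_gt_0_iff)
  have "int (card (UNIV :: 'k set)) - 1 = int (card (UNIV :: 'k set) - 1)"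
    using cpos by simp
  also have "\<dots> = int (\<Sum>m\<in>DD. card (KK m) - 1)"
    using card_nonzero_sum cnz by simp
  also have "\<dots> = (\<Sum>m\<in>DD. int (card (KK m) - 1))"
    by (rule of_nat_sum)
  also have "\<dots> = (\<Sum>m\<in>DD. int (card (KK m)) - 1)"
    by (intro sum.cong refl) (use KKpos in \<open>simp add: of_nat_diff\<close>)
  also have "\<dots> = (\<Sum>m\<in>DD. int (card (KK m))) - int (card DD)"
    by (simp add: sum_subtractf)
  finally have eq: "int (card DD) - 1 = (\<Sum>m\<in>DD. int (card (KK m))) - int (card (UNIV :: 'k set))"
    by simp
  have "int p dvd (\<Sum>m\<in>DD. int (card (KK m)))"
  proof (intro dvd_sum)
    fix m assume "m \<in> DD"
    then obtain x where "x \<noteq> 0" "x \<in> KK m" by (auto simp: DD_def KK_def)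
    thus "int p dvd int (card (KK m))" using p_dvd_KK[OF assms(1)] by simp
  qed
  moreover have "int p dvd int (card (UNIV :: 'k set))"
    using assms by (cases h) auto
  ultimately show "int p dvd int (card DD) - 1" unfolding eq by (intro dvd_diff)
qed

lemma line_count:
  assumes q: "card (UNIV :: 'k set) = p ^ h" "h \<ge> 1" and u: "(u1, u2, u3) \<noteq> ((0::'k), (0::'k), (0::'k))"
  shows "int p dvd int (card {x::'k. x * u1 + x ^ p * u2 + u3 = 0})
     - int ((if u2 = 0 then 1 else 0) + card {m. m \<notin> DD \<and> u1 + m * u2 = 0})"
proof -
  have pq: "int p dvd int (card (UNIV :: 'k set))"
    using q by (cases h) auto
  have pD: "int p dvd int (card DD) - 1" using DD_bounds[OF q] by simp
  consider (a) "u2 = 0" "u1 \<noteq> 0" | (b) "u2 = 0" "u1 = 0" | (c) "u2 \<noteq> 0" by blast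
  then show ?thesis
  proof cases
    case a
    have "x * u1 + x ^ p * u2 + u3 = (x - (- u3 / u1)) * u1" for x
      using a by (simp add: algebra_simps)
    hence "{x::'k. x * u1 + x ^ p * u2 + u3 = 0} = {- u3 / u1}"
      using a by (auto simp: eq_neg_iff_add_eq_0)
    moreover have "{m. m \<notin> DD \<and> u1 + m * u2 = 0} = {}" using a by auto
    ultimately show ?thesis using a by simp
  next
    case b
    hence "u3 \<noteq> 0" using u by auto
    hence "{x::'k. x * u1 + x ^ p * u2 + u3 = 0} = {}" using b by auto
    moreover have "{m. m \<notin> DD \<and> u1 + m * u2 = 0} = UNIV - DD" using b by auto
    moreover have "card (UNIV - DD) = card (UNIV :: 'k set) - card DD"
      by (simp add: card_Diff_subset)
    moreover have "card DD \<le> card (UNIV :: 'k set)" by (simp add: card_mono)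
    ultimately have eq: "int (card {x::'k. x * u1 + x ^ p * u2 + u3 = 0})
     - int ((if u2 = 0 then 1 else 0) + card {m. m \<notin> DD \<and> u1 + m * u2 = 0})
      = (int (card DD) - 1) - int (card (UNIV :: 'k set))"
      using b by (simp add: of_nat_diff)
    show ?thesis unfolding eq by (rule dvd_diff[OF pD pq])
  next
    case c
    define m0 where "m0 = - u1 / u2"
    define b where "b = - u3 / u2"
    have m0u: "m0 * u2 = - u1" using c by (simp add: m0_def)
    have bu: "b * u2 = - u3" using c by (simp add: b_def)
    have e1: "x * u1 + x ^ p * u2 + u3 = (psi m0 x - b) * u2" for x
    proof -
      have "(psi m0 x - b) * u2 = x ^ p * u2 - (m0 * u2) * x - b * u2"
        by (simp add: psi_def algebra_simps)
      thus ?thesis using m0u bu by (simp add: algebra_simps)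
    qed
    have e2: "u1 + m * u2 = (m - m0) * u2" for m
      using m0u by (simp add: algebra_simps)
    have A: "{x::'k. x * u1 + x ^ p * u2 + u3 = 0} = {x. psi m0 x = b}"
      using c by (simp add: e1)
    have B: "{m. m \<notin> DD \<and> u1 + m * u2 = 0} = {m. m \<notin> DD \<and> m = m0}"
      using c by (simp add: e2)
    show ?thesis
    proof (cases "m0 \<in> DD")
      case True
      then obtain x where x: "x \<noteq> 0" "x \<in> KK m0" by (auto simp: DD_def KK_def)
      have "p dvd card {x. psi m0 x = b}"
        using card_fiber_cases[of m0 b] p_dvd_KK[OF q(1) x(2,1)] by auto
      moreover have c1: "card {m. m \<notin> DD \<and> m = m0} = 0" using True by auto
      ultimately show ?thesis unfolding A B c1 using c by simp
    next
      case False
      have K: "KK m0 = {0}"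
        using False zero_KK[of m0] by (auto simp: DD_def KK_def)
      have "inj (psi m0)"
      proof (rule injI)
        fix x y assume "psi m0 x = psi m0 y"
        hence "x - y \<in> KK m0" by (simp add: KK_psi psi_diff)
        thus "x = y" using K by simp
      qed
      hence "surj (psi m0)" by (intro finite_UNIV_inj_surj) auto
      then obtain x0 where "psi m0 x0 = b" by (metis surjD)
      hence "card {x. psi m0 x = b} = 1" using card_fiber[of m0 x0 b] K by simp
      moreover have "{m. m \<notin> DD \<and> m = m0} = {m0}" using False by auto
      hence c1: "card {m. m \<notin> DD \<and> m = m0} = 1" by simp
      ultimately show ?thesis unfolding A B c1 using c by simp
    qed
  qed
qed

end


lemma smul3_1 [simp]: "smul3 1 v = v"
  by (cases v) (simp add: smul3_def)

lemma pt_self: "v \<in> pg_pt v"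
  unfolding pg_pt_def by (rule CollectI, rule exI[of _ 1]) simp

lemma pt_eq_D: "pg_pt v = pg_pt w \<Longrightarrow> \<exists>t. t \<noteq> 0 \<and> v = smul3 t w"
  using pt_self[of v] unfolding pg_pt_def by auto

lemma dot3_smul: "dot3 (smul3 t w) u = t * dot3 w u"
  by (cases w; cases u) (simp add: smul3_def dot3_def algebra_simps)

lemma pt_in_line:
  assumes "v \<noteq> (0, 0, 0)"
  shows "pg_pt v \<in> pg_line u \<longleftrightarrow> dot3 v u = 0"
proof
  assume "pg_pt v \<in> pg_line u"
  then obtain w where w: "pg_pt v = pg_pt w" "dot3 w u = 0" unfolding pg_line_def by auto
  then obtain t where "v = smul3 t w" using pt_eq_D by blast
  thus "dot3 v u = 0" using w by (simp add: dot3_smul)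
next
  assume "dot3 v u = 0"
  thus "pg_pt v \<in> pg_line u" using assms unfolding pg_line_def by blast
qed

lemma sum_ind:
  assumes "finite S"
  shows "(\<Sum>x\<in>S. if x \<in> X then a else 0) = of_nat (card (S \<inter> X)) * (a :: int)"
proof -
  have "(\<Sum>x\<in>S. if x \<in> X then a else 0) = (\<Sum>x\<in>S \<inter> X. a)"
    using sum.inter_restrict[OF assms, of "\<lambda>_. a" X] by (simp add: Int_def)
  thus ?thesis by simp
qed

lemma pt_in_points: "v \<noteq> (0,0,0) \<Longrightarrow> pg_pt v \<in> pg_points"
  unfolding pg_points_def by auto

lemma finite_any: "finite (A :: ('k::finite) set)"
  by simp



theorem mainTheorem19:
  fixes p h :: nat
  assumes "prime p" and "h \<ge> 1"
    and "card (UNIV :: 'k::{field, finite} set) = p ^ h"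
  shows "dual_code p (code_PG p :: ('k vec3 set \<Rightarrow> int) set) \<noteq> {\<lambda>_. 0}
    \<and> real (min_dist (dual_code p (code_PG p :: ('k vec3 set \<Rightarrow> int) set)))
        \<le> 2 * real (p ^ h) + 1 - (real (p ^ h) - 1) / (real p - 1)"
proof -
  have ch: "CHAR('k) = p" using CHAR_finite_field[OF assms(1) assms(3)] .
  have p2: "p \<ge> 2" using assms(1) prime_ge_2_nat by blast
  define D where "D = (DD p :: 'k set)"
  define Fv where "Fv = (\<lambda>x::'k. (x, x ^ p, 1::'k))"
  define E where "E = ((0::'k), (1::'k), (0::'k))"
  define Bv where "Bv = (\<lambda>m::'k. (1::'k, m, 0::'k))"
  define AP where "AP = (\<lambda>x. pg_pt (Fv x)) ` (UNIV :: 'k set)"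
  define BP where "BP = insert (pg_pt E) ((\<lambda>m. pg_pt (Bv m)) ` (- D))"
  define c :: "'k vec3 set \<Rightarrow> int" where
    "c P = (if P \<in> AP then 1 else if P \<in> BP then int p - 1 else 0)" for P
  have Fnz: "Fv x \<noteq> (0,0,0)" for x by (simp add: Fv_def)
  have Bnz: "Bv m \<noteq> (0,0,0)" for m by (simp add: Bv_def)
  have Enz: "E \<noteq> (0,0,0)" by (simp add: E_def)
  have APsub: "AP \<subseteq> pg_points" unfolding AP_def using pt_in_points[OF Fnz] by blast
  have BPsub: "BP \<subseteq> pg_points" unfolding BP_def using pt_in_points[OF Bnz] pt_in_points[OF Enz] by blast
  have injF: "inj (\<lambda>x. pg_pt (Fv x))"
  proof (rule injI)
    fix x y assume "pg_pt (Fv x) = pg_pt (Fv y)"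
    then obtain t where "t \<noteq> 0" "Fv x = smul3 t (Fv y)" using pt_eq_D by blast
    thus "x = y" by (simp add: Fv_def smul3_def)
  qed
  have injB: "inj (\<lambda>m. pg_pt (Bv m))"
  proof (rule injI)
    fix x y assume "pg_pt (Bv x) = pg_pt (Bv y)"
    then obtain t where "t \<noteq> 0" "Bv x = smul3 t (Bv y)" using pt_eq_D by blast
    thus "x = y" by (simp add: Bv_def smul3_def)
  qed
  have EnB: "pg_pt E \<noteq> pg_pt (Bv m)" for m
  proof
    assume "pg_pt E = pg_pt (Bv m)"
    then obtain t where "t \<noteq> 0" "E = smul3 t (Bv m)" using pt_eq_D by blast
    thus False by (simp add: Bv_def E_def smul3_def)
  qed
  have FnB: "pg_pt (Fv x) \<noteq> pg_pt (Bv m)" for x m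
  proof
    assume "pg_pt (Fv x) = pg_pt (Bv m)"
    then obtain t where "t \<noteq> 0" "Fv x = smul3 t (Bv m)" using pt_eq_D by blast
    thus False by (simp add: Bv_def Fv_def smul3_def)
  qed
  have FnE: "pg_pt (Fv x) \<noteq> pg_pt E" for x
  proof
    assume "pg_pt (Fv x) = pg_pt E"
    then obtain t where "t \<noteq> 0" "Fv x = smul3 t E" using pt_eq_D by blast
    thus False by (simp add: E_def Fv_def smul3_def)
  qed
  have disj: "AP \<inter> BP = {}"
    unfolding AP_def BP_def using FnB FnE by auto
  have cardAP: "card AP = card (UNIV :: 'k set)"
    unfolding AP_def using injF by (simp add: card_image)
  have cardBP: "card BP = 1 + (card (UNIV :: 'k set) - card D)"
  proof -
    have "card ((\<lambda>m. pg_pt (Bv m)) ` (- D)) = card (- D)"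
      using injB by (simp add: card_image inj_on_subset)
    moreover have "pg_pt E \<notin> (\<lambda>m. pg_pt (Bv m)) ` (- D)" using EnB by auto
    moreover have "card (- D) = card (UNIV :: 'k set) - card D"
      by (simp add: Compl_eq_Diff_UNIV card_Diff_subset)
    ultimately show ?thesis unfolding BP_def by simp
  qed
  have supp: "{x \<in> (pg_points :: 'k vec3 set set). c x \<noteq> 0} = AP \<union> BP"
    using APsub BPsub p2 by (auto simp: c_def)
  have wt: "weight c = card (UNIV :: 'k set) + (1 + (card (UNIV :: 'k set) - card D))"
    unfolding weight_def supp using disj cardAP cardBP by (simp add: card_Un_disjoint)
  have line: "int p dvd (\<Sum>x\<in>pg_points. c x * incid L x)" if "L \<in> pg_lines" for L
  proof -
    have "L \<in> pg_line ` (UNIV - {(0,0,0)})" using that unfolding pg_lines_def .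
    then obtain u where u0: "u \<in> UNIV - {(0,0,0)}" and u2: "L = pg_line u" by (rule imageE)
    from u0 have u1: "u \<noteq> (0,0,0)" by blast
    note u = u1 u2
    obtain u1 u2 u3 where u123: "u = (u1, u2, u3)" by (cases u)
    have ce: "c x * incid L x = (if x \<in> AP \<inter> L then 1 else 0) + (if x \<in> BP \<inter> L then int p - 1 else 0)" for x
      using disj by (auto simp: c_def incid_def)
    have "(\<Sum>x\<in>pg_points. c x * incid L x) =
       (\<Sum>x\<in>pg_points. if x \<in> AP \<inter> L then 1 else 0) + (\<Sum>x\<in>pg_points. if x \<in> BP \<inter> L then int p - 1 else 0)"
      unfolding ce by (rule sum.distrib)
    also have "\<dots> = int (card (AP \<inter> L)) + int (card (BP \<inter> L)) * (int p - 1)"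
    proof -
      have "pg_points \<inter> (AP \<inter> L) = AP \<inter> L" "pg_points \<inter> (BP \<inter> L) = BP \<inter> L"
        using APsub BPsub by auto
      moreover have "(\<Sum>x\<in>pg_points. if x \<in> AP \<inter> L then 1 else 0) = int (card (pg_points \<inter> (AP \<inter> L))) * 1"
        by (rule sum_ind) simp
      moreover have "(\<Sum>x\<in>pg_points. if x \<in> BP \<inter> L then int p - 1 else 0) = int (card (pg_points \<inter> (BP \<inter> L))) * (int p - 1)"
        by (rule sum_ind) simp
      ultimately show ?thesis by (simp only: mult_1_right)
    qed
    finally have S: "(\<Sum>x\<in>pg_points. c x * incid L x) = int (card (AP \<inter> L)) + int (card (BP \<inter> L)) * (int p - 1)" .
    have "AP \<inter> L = (\<lambda>x. pg_pt (Fv x)) ` {x. dot3 (Fv x) u = 0}"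
      unfolding AP_def u(2) using pt_in_line[OF Fnz, where u=u] by auto
    hence cA: "card (AP \<inter> L) = card {x::'k. x * u1 + x ^ p * u2 + u3 = 0}"
      using injF by (simp add: card_image inj_on_subset Fv_def dot3_def u123)
    have "BP \<inter> L = (if dot3 E u = 0 then {pg_pt E} else {}) \<union> (\<lambda>m. pg_pt (Bv m)) ` {m. m \<notin> D \<and> dot3 (Bv m) u = 0}"
      unfolding BP_def u(2) using pt_in_line[OF Bnz, where u=u] pt_in_line[OF Enz, where u=u] by auto
    moreover have "card ((\<lambda>m. pg_pt (Bv m)) ` {m. m \<notin> D \<and> dot3 (Bv m) u = 0}) = card {m. m \<notin> D \<and> u1 + m * u2 = 0}"
      using injB by (simp add: card_image inj_on_subset Bv_def dot3_def u123)
    moreover have "pg_pt E \<notin> (\<lambda>m. pg_pt (Bv m)) ` {m. m \<notin> D \<and> dot3 (Bv m) u = 0}"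
      using EnB by auto
    moreover have "dot3 E u = u2" by (simp add: E_def dot3_def u123)
    ultimately have cB: "card (BP \<inter> L) = (if u2 = 0 then 1 else 0) + card {m. m \<notin> D \<and> u1 + m * u2 = 0}"
      by (simp add: card_Un_disjoint)
    have lc: "int p dvd int (card {x::'k. x * u1 + x ^ p * u2 + u3 = 0})
      - int ((if u2 = 0 then 1 else 0) + card {m. m \<notin> D \<and> u1 + m * u2 = 0})"
      unfolding D_def by (rule line_count[OF ch assms(3) assms(2)]) (use u u123 in simp)
    have "(\<Sum>x\<in>pg_points. c x * incid L x) = (int (card (AP \<inter> L)) - int (card (BP \<inter> L))) + int p * int (card (BP \<inter> L))"
      unfolding S by (simp add: algebra_simps)
    thus ?thesis using lc unfolding cA cB by simp
  qed
  have words: "c \<in> words p"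
    unfolding words_def using APsub BPsub p2 by (auto simp: c_def)
  have dual: "c \<in> dual_code p (code_PG p)"
    unfolding dual_code_def
  proof (intro CollectI conjI ballI words)
    fix d assume "d \<in> (code_PG p :: ('k vec3 set \<Rightarrow> int) set)"
    then obtain a :: "'k vec3 set set \<Rightarrow> int" where
      ha: "\<forall>x\<in>pg_points. d x = (\<Sum>L\<in>pg_lines. a L * incid L x) mod int p"
      unfolding code_PG_def by blast
    define S where "S x = (\<Sum>L\<in>pg_lines. a L * incid L x)" for x
    have "(\<Sum>x\<in>pg_points. c x * d x) mod int p = (\<Sum>x\<in>pg_points. (c x * d x) mod int p) mod int p"
      by (rule mod_sum_eq[symmetric])
    also have "\<dots> = (\<Sum>x\<in>pg_points. (c x * S x) mod int p) mod int p"
    proof (rule arg_cong[where f="\<lambda>z. z mod int p"], rule sum.cong[OF refl])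
      fix x assume x: "x \<in> (pg_points :: 'k vec3 set set)"
      have "d x = S x mod int p" using ha x unfolding S_def by blast
      thus "(c x * d x) mod int p = (c x * S x) mod int p"
        by (simp only: mod_mult_right_eq)
    qed
    also have "\<dots> = (\<Sum>x\<in>pg_points. c x * S x) mod int p"
      by (rule mod_sum_eq)
    also have "(\<Sum>x\<in>pg_points. c x * S x) = (\<Sum>x\<in>pg_points. \<Sum>L\<in>pg_lines. a L * (c x * incid L x))"
      unfolding S_def by (simp add: sum_distrib_left algebra_simps)
    also have "\<dots> = (\<Sum>L\<in>pg_lines. \<Sum>x\<in>pg_points. a L * (c x * incid L x))"
      by (rule sum.swap)
    also have "\<dots> = (\<Sum>L\<in>pg_lines. a L * (\<Sum>x\<in>pg_points. c x * incid L x))"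
      by (simp add: sum_distrib_left)
    also have "\<dots> mod int p = 0"
      by (intro dvd_imp_mod_0 dvd_sum dvd_mult line)
    finally show "(\<Sum>x\<in>pg_points. c x * d x) mod int p = 0" .
  qed
  have cnz: "c \<noteq> (\<lambda>_. 0)"
  proof
    assume "c = (\<lambda>_. 0)"
    hence "c (pg_pt (Fv 0)) = 0" by simp
    moreover have "pg_pt (Fv 0) \<in> AP" unfolding AP_def by simp
    ultimately show False by (simp add: c_def)
  qed
  have fin: "finite (weight ` (dual_code p (code_PG p :: ('k vec3 set \<Rightarrow> int) set) - {\<lambda>_. 0}))"
  proof (rule finite_subset)
    show "weight ` (dual_code p (code_PG p :: ('k vec3 set \<Rightarrow> int) set) - {\<lambda>_. 0}) \<subseteq> {..card (pg_points :: 'k vec3 set set)}"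
      unfolding weight_def by (auto intro: card_mono)
  qed simp
  have md: "min_dist (dual_code p (code_PG p :: ('k vec3 set \<Rightarrow> int) set)) \<le> weight c"
    unfolding min_dist_def using dual cnz by (intro Min_le fin) auto
  have bnd: "card (UNIV :: 'k set) - 1 \<le> card D * (p - 1)"
    unfolding D_def by (rule DD_bounds(2)[OF ch assms(3) assms(2)])
  have Dle: "card D \<le> card (UNIV :: 'k set)" by (simp add: card_mono)
  have qpos: "card (UNIV :: 'k set) \<ge> 1" by (simp add: Suc_leI card_gt_0_iff)
  define q where "q = card (UNIV :: 'k set)"
  have rb: "real q - 1 \<le> real (card D) * (real p - 1)"
  proof -
    have "real (q - 1) \<le> real (card D * (p - 1))" using bnd unfolding q_def by linarith
    thus ?thesis using qpos p2 unfolding q_def by (simp add: of_nat_diff)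
  qed
  have "(real q - 1) / (real p - 1) \<le> real (card D)"
    using rb p2 by (simp add: pos_divide_le_eq)
  moreover have "real (weight c) = 2 * real q + 1 - real (card D)"
    using wt Dle unfolding q_def by (simp add: of_nat_diff)
  ultimately have "real (weight c) \<le> 2 * real (p ^ h) + 1 - (real (p ^ h) - 1) / (real p - 1)"
    using assms(3) unfolding q_def by simp
  moreover have "dual_code p (code_PG p :: ('k vec3 set \<Rightarrow> int) set) \<noteq> {\<lambda>_. 0}"
    using dual cnz by auto
  ultimately show ?thesis using md by (meson le_trans of_nat_le_iff order_trans)
qed


end
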